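(* Let $p\ge2$. For every $\beta>0$ and $x>0$, almost surely $$\lim_{N\to\infty}AF_N(\beta)=\max_{m\in[0,1]}\Big(F\Big(\beta,\frac{\beta^2pm^{p-1}}{2}\Big)-\frac{\beta^2(p-1)m^p}{2}\Big),$$ $$\lim_{N\to\infty}L_N(x)=\max_{m\in[0,1]}\Big(F\Big(\beta,\frac{\beta xpm^{p-1}}{2}\Big)-\frac{\beta x(p-1)m^p}{2}\Big).$$
   Context: $\Sigma_N=\{-1,1\}^N$, $(g_{i_1,\dots,i_p})$ i.i.d. standard Gaussians, $H_N(\sigma)=N^{-(p-1)/2}\sum_{1\le i_1,\dots,i_p\le N}g_{i_1,\dots,i_p}\sigma_{i_1}\cdots\sigma_{i_p}$. Let $h=(h_i)_{i\le N}$ be i.i.d. uniform signs in $\{\pm1\}$ independent of $g$, and $m_N(\sigma)=\frac1N\sum_{i=1}^Nh_i\sigma_i$. Define $F_N(\beta,y)=\frac1N\log\sum_{\sigma}2^{-N}\exp\big(\tfrac\beta{\sqrt2}H_N(\sigma)+yNm_N(\sigma)\big)$; it is known that $F_N(\beta,y)$ converges a.s. to a nonrandom limit $F(\beta,y)$ (given by the Parisi formula), which is differentiable in $y$ with $\partial_yF(\beta,y)>0$ for $y>0$. Further, $AF_N(\beta)=\frac1N\log\sum_{\sigma}2^{-N}\exp\big(\tfrac\beta{\sqrt2}H_N(\sigma)+\tfrac{\beta^2}{2}Nm_N(\sigma)^p\big)$ and, for $x>0$, $L_N(x)=\frac1N\log\sum_{\sigma}2^{-N}\exp\big(\tfrac\beta{\sqrt2}H_N(\sigma)+\tfrac{\beta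 x}{2}Nm_N(\sigma)^p\big)$. *)

theory Defs
  imports "HOL-Probability.Probability"
begin

text \<open>Index convention: spins and indices are 0-based, i.e. i ranges over {..<N}
  instead of {1..N}; a multi-index (i_1,...,i_p) is a list of length p.\<close>

definition cfg :: "nat \<Rightarrow> (nat \<Rightarrow> real) set" where
  "cfg N = PiE {..<N} (\<lambda>_. {-1, 1})"

definition idx :: "nat \<Rightarrow> nat \<Rightarrow> nat list set" where
  "idx p N = {l. length l = p \<and> set l \<subseteq> {..<N}}"

definition Ham :: "nat \<Rightarrow> nat \<Rightarrow> (nat list \<Rightarrow> real) \<Rightarrow> (nat \<Rightarrow> real) \<Rightarrow> real" where
  "Ham p N g \<sigma> = real N powr (- (real p - 1) / 2) *
     (\<Sum>l\<in>idx p N. g l * (\<Prod>j<p. \<sigma> (l ! j)))"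

definition mag :: "nat \<Rightarrow> (nat \<Rightarrow> real) \<Rightarrow> (nat \<Rightarrow> real) \<Rightarrow> real" where
  "mag N h \<sigma> = (\<Sum>i<N. h i * \<sigma> i) / real N"

definition FN :: "nat \<Rightarrow> nat \<Rightarrow> (nat list \<Rightarrow> real) \<Rightarrow> (nat \<Rightarrow> real) \<Rightarrow> real \<Rightarrow> real \<Rightarrow> real" where
  "FN p N g h \<beta> y = ln (\<Sum>\<sigma>\<in>cfg N. 2 powr (- real N) *
      exp (\<beta> / sqrt 2 * Ham p N g \<sigma> + y * real N * mag N h \<sigma>)) / real N"

definition AFN :: "nat \<Rightarrow> nat \<Rightarrow> (nat list \<Rightarrow> real) \<Rightarrow> (nat \<Rightarrow> real) \<Rightarrow> real \<Rightarrow> real" where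
  "AFN p N g h \<beta> = ln (\<Sum>\<sigma>\<in>cfg N. 2 powr (- real N) *
      exp (\<beta> / sqrt 2 * Ham p N g \<sigma> + \<beta>\<^sup>2 / 2 * real N * mag N h \<sigma> ^ p)) / real N"

definition LN :: "nat \<Rightarrow> nat \<Rightarrow> (nat list \<Rightarrow> real) \<Rightarrow> (nat \<Rightarrow> real) \<Rightarrow> real \<Rightarrow> real \<Rightarrow> real" where
  "LN p N g h \<beta> x = ln (\<Sum>\<sigma>\<in>cfg N. 2 powr (- real N) *
      exp (\<beta> / sqrt 2 * Ham p N g \<sigma> + \<beta> * x / 2 * real N * mag N h \<sigma> ^ p)) / real N"

end

theory Submission
  imports Defs
begin


lemma sum_pow_bounds:
  fixes x y :: real assumes "0 \<le> y" "y \<le> x"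
  shows "real n * y ^ (n - 1) \<le> (\<Sum>i<n. y ^ (n - Suc i) * x ^ i)"
    and "(\<Sum>i<n. y ^ (n - Suc i) * x ^ i) \<le> real n * x ^ (n - 1)"
proof -
  have "(\<Sum>i<n. y ^ (n - 1)) \<le> (\<Sum>i<n. y ^ (n - Suc i) * x ^ i)"
  proof (rule sum_mono)
    fix i assume "i \<in> {..<n}"
    hence "n - 1 = (n - Suc i) + i" by auto
    hence "y ^ (n - 1) = y ^ (n - Suc i) * y ^ i" by (simp add: power_add)
    also have "\<dots> \<le> y ^ (n - Suc i) * x ^ i"
      using assms by (intro mult_left_mono power_mono) auto
    finally show "y ^ (n - 1) \<le> y ^ (n - Suc i) * x ^ i" .
  qed
  thus "real n * y ^ (n - 1) \<le> (\<Sum>i<n. y ^ (n - Suc i) * x ^ i)" by simp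
  have "(\<Sum>i<n. y ^ (n - Suc i) * x ^ i) \<le> (\<Sum>i<n. x ^ (n - 1))"
  proof (rule sum_mono)
    fix i assume "i \<in> {..<n}"
    hence "n - 1 = (n - Suc i) + i" by auto
    hence "x ^ (n - 1) = x ^ (n - Suc i) * x ^ i" by (simp add: power_add)
    moreover have "y ^ (n - Suc i) * x ^ i \<le> x ^ (n - Suc i) * x ^ i"
      using assms by (intro mult_right_mono power_mono) auto
    ultimately show "y ^ (n - Suc i) * x ^ i \<le> x ^ (n - 1)" by simp
  qed
  thus "(\<Sum>i<n. y ^ (n - Suc i) * x ^ i) \<le> real n * x ^ (n - 1)" by simp
qed

lemma tangent_ineq:
  fixes a t :: real assumes "0 \<le> a" "0 \<le> t"
  shows "real p * a ^ (p - 1) * t - (real p - 1) * a ^ p \<le> t ^ p"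
proof -
  have key: "real p * a ^ (p - 1) * (t - a) \<le> t ^ p - a ^ p"
  proof (cases "a \<le> t")
    case True
    have "t ^ p - a ^ p = (t - a) * (\<Sum>i<p. a ^ (p - Suc i) * t ^ i)" by (rule power_diff_sumr2)
    moreover have "real p * a ^ (p - 1) \<le> (\<Sum>i<p. a ^ (p - Suc i) * t ^ i)"
      using sum_pow_bounds(1)[OF assms(1) True] .
    moreover have "real p * a ^ (p - 1) * (t - a) \<le> (\<Sum>i<p. a ^ (p - Suc i) * t ^ i) * (t - a)"
      using calculation(2) True by (intro mult_right_mono) auto
    ultimately show ?thesis by (simp add: mult.commute)
  next
    case False
    have "a ^ p - t ^ p = (a - t) * (\<Sum>i<p. t ^ (p - Suc i) * a ^ i)" by (rule power_diff_sumr2)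
    moreover have "(\<Sum>i<p. t ^ (p - Suc i) * a ^ i) \<le> real p * a ^ (p - 1)"
      using sum_pow_bounds(2)[OF assms(2)] False by simp
    moreover have "(a - t) * (\<Sum>i<p. t ^ (p - Suc i) * a ^ i) \<le> (a - t) * (real p * a ^ (p - 1))"
      using calculation(2) False by (intro mult_left_mono) auto
    ultimately have "a ^ p - t ^ p \<le> (a - t) * (real p * a ^ (p - 1))" by simp
    thus ?thesis by (simp add: algebra_simps)
  qed
  show ?thesis
  proof (cases p)
    case 0 thus ?thesis by simp
  next
    case (Suc k)
    have "real p * a ^ (p - 1) * t - (real p - 1) * a ^ p = real p * a ^ (p - 1) * (t - a) + a ^ p"
      using Suc by (simp add: algebra_simps)
    thus ?thesis using key by linarith
  qed
qed

lemma pow_diff_le: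
  fixes x y :: real assumes "0 \<le> y" "y \<le> x" "x \<le> 1"
  shows "x ^ p - y ^ p \<le> real p * (x - y)"
proof -
  have "x ^ p - y ^ p = (x - y) * (\<Sum>i<p. y ^ (p - Suc i) * x ^ i)" by (rule power_diff_sumr2)
  moreover have "(\<Sum>i<p. y ^ (p - Suc i) * x ^ i) \<le> real p * x ^ (p - 1)"
    using sum_pow_bounds(2)[OF assms(1,2)] .
  moreover have "x ^ (p - 1) \<le> 1" using assms by (simp add: power_le_one)
  hence "real p * x ^ (p - 1) \<le> real p" by (simp add: mult_left_le)
  ultimately have "x ^ p - y ^ p \<le> (x - y) * real p"
    using assms by (smt (verit) mult_left_mono)
  thus ?thesis by (simp add: mult.commute)
qed



lemma window_exists:
  fixes t :: real assumes "0 \<le> t" "t \<le> 1" "K \<ge> 1"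
  shows "\<exists>k<K. real k / real K \<le> t \<and> t \<le> (real k + 1) / real K"
proof (cases "t < 1")
  case True
  define k where "k = nat \<lfloor>t * real K\<rfloor>"
  have Kp: "real K > 0" using assms by simp
  have fl0: "0 \<le> \<lfloor>t * real K\<rfloor>" using assms by simp
  hence rk: "real k = of_int \<lfloor>t * real K\<rfloor>" unfolding k_def by simp
  have a: "real k \<le> t * real K" using rk by linarith
  have b: "t * real K < real k + 1" using rk by linarith
  have "t * real K < real K" using True Kp by simp
  hence "real k < real K" using a by linarith
  hence "k < K" by simp
  moreover have "real k / real K \<le> t" using a Kp by (simp add: divide_le_eq)
  moreover have "t \<le> (real k + 1) / real K" using b Kp by (simp add: le_divide_eq)
  ultimately show ?thesis by blast
next
  case False
  hence t1: "t = 1" using assms by simp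
  have "K - 1 < K" using assms by simp
  moreover have "real (K - 1) / real K \<le> t" using assms t1 by (simp add: divide_le_eq)
  moreover have "t \<le> (real (K - 1) + 1) / real K" using assms t1 by (simp add: of_nat_diff)
  ultimately show ?thesis by blast
qed

lemma window_pt:
  fixes c n t :: real and K p :: nat
  assumes "c \<ge> 0" "n \<ge> 0" "0 \<le> t" "t \<le> 1" "K \<ge> 1"
  shows "exp (c * n * t ^ p) \<le> (\<Sum>k<K. exp (n * (c * ((real k + 1) / real K) ^ p
            - c * real p * (real k / real K) ^ (p - 1) * (real k / real K)))
          * exp (c * real p * (real k / real K) ^ (p - 1) * n * t))"
    (is "_ \<le> (\<Sum>k<K. ?f k)")
proof -
  obtain k where k: "k < K" "real k / real K \<le> t" "t \<le> (real k + 1) / real K"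
    using window_exists[OF assms(3,4,5)] by blast
  define u where "u = real k / real K"
  define u' where "u' = (real k + 1) / real K"
  define y where "y = c * real p * u ^ (p - 1)"
  have u0: "0 \<le> u" unfolding u_def by simp
  have y0: "0 \<le> y" unfolding y_def using assms u0 by simp
  have "t ^ p \<le> u' ^ p" using k assms unfolding u'_def by (intro power_mono) auto
  hence 1: "c * n * t ^ p \<le> c * n * u' ^ p" using assms by (simp add: mult_left_mono)
  have "0 \<le> y * n * (t - u)" using y0 assms k unfolding u_def by simp
  hence "c * n * t ^ p \<le> n * (c * u' ^ p - y * u) + y * n * t" using 1
    by (simp add: algebra_simps)
  hence "exp (c * n * t ^ p) \<le> exp (n * (c * u' ^ p - y * u) + y * n * t)" by simp
  also have "\<dots> = ?f k" unfolding u_def u'_def y_def by (simp add: exp_add)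
  also have "\<dots> \<le> (\<Sum>k<K. ?f k)"
    by (rule member_le_sum) (use k in auto)
  finally show ?thesis .
qed



lemma split_PQ:
  fixes f :: "'a \<Rightarrow> real" and m :: "'a \<Rightarrow> real"
  assumes "finite S"
  shows "sum f S = sum f {\<sigma>\<in>S. 0 \<le> m \<sigma>} + sum f {\<sigma>\<in>S. m \<sigma> < 0}"
proof -
  have "S = {\<sigma>\<in>S. 0 \<le> m \<sigma>} \<union> {\<sigma>\<in>S. m \<sigma> < 0}" by auto
  hence "sum f S = sum f ({\<sigma>\<in>S. 0 \<le> m \<sigma>} \<union> {\<sigma>\<in>S. m \<sigma> < 0})" by simp
  also have "\<dots> = sum f {\<sigma>\<in>S. 0 \<le> m \<sigma>} + sum f {\<sigma>\<in>S. m \<sigma> < 0}"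
    by (rule sum.union_disjoint) (use assms in auto)
  finally show ?thesis .
qed

lemma neg_part_le:
  fixes w m :: "'a \<Rightarrow> real"
  assumes "finite S" "\<And>\<sigma>. \<sigma> \<in> S \<Longrightarrow> 0 < w \<sigma>" "n \<ge> 0" "y \<ge> 0"
  shows "(\<Sum>\<sigma>\<in>{\<sigma>\<in>S. m \<sigma> < 0}. w \<sigma> * exp (y * n * m \<sigma>)) \<le> (\<Sum>\<sigma>\<in>S. w \<sigma> * exp (0 * n * m \<sigma>))"
proof -
  have "(\<Sum>\<sigma>\<in>{\<sigma>\<in>S. m \<sigma> < 0}. w \<sigma> * exp (y * n * m \<sigma>)) \<le> (\<Sum>\<sigma>\<in>{\<sigma>\<in>S. m \<sigma> < 0}. w \<sigma> * exp (0 * n * m \<sigma>))"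
  proof (rule sum_mono)
    fix \<sigma> assume s: "\<sigma> \<in> {\<sigma>\<in>S. m \<sigma> < 0}"
    have "y * n * m \<sigma> \<le> 0" using s assms by (simp add: mult_nonneg_nonpos)
    hence "exp (y * n * m \<sigma>) \<le> exp (0 * n * m \<sigma>)" by simp
    thus "w \<sigma> * exp (y * n * m \<sigma>) \<le> w \<sigma> * exp (0 * n * m \<sigma>)"
      using assms(2)[of \<sigma>] s by (intro mult_left_mono) auto
  qed
  also have "\<dots> \<le> (\<Sum>\<sigma>\<in>S. w \<sigma> * exp (0 * n * m \<sigma>))"
    by (rule sum_mono2) (use assms in \<open>auto intro: less_imp_le\<close>)
  finally show ?thesis .
qed

lemma lower_N:
  fixes w m :: "'a \<Rightarrow> real" and a c n :: real and p :: nat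
  assumes "finite S" "\<And>\<sigma>. \<sigma> \<in> S \<Longrightarrow> 0 < w \<sigma>" "n \<ge> 0" "a \<ge> 0" "c \<ge> 0"
  shows "exp (- (c * (real p - 1) * a ^ p * n)) *
     ((\<Sum>\<sigma>\<in>S. w \<sigma> * exp (c * real p * a ^ (p - 1) * n * m \<sigma>)) - (\<Sum>\<sigma>\<in>S. w \<sigma> * exp (0 * n * m \<sigma>)))
     \<le> (\<Sum>\<sigma>\<in>S. w \<sigma> * exp (c * n * m \<sigma> ^ p))"
proof -
  define y where "y = c * real p * a ^ (p - 1)"
  have y0: "y \<ge> 0" unfolding y_def using assms by simp
  define P where "P = {\<sigma>\<in>S. 0 \<le> m \<sigma>}"
  have "(\<Sum>\<sigma>\<in>S. w \<sigma> * exp (y * n * m \<sigma>)) = (\<Sum>\<sigma>\<in>P. w \<sigma> * exp (y * n * m \<sigma>))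
      + (\<Sum>\<sigma>\<in>{\<sigma>\<in>S. m \<sigma> < 0}. w \<sigma> * exp (y * n * m \<sigma>))"
    unfolding P_def by (rule split_PQ[OF assms(1)])
  moreover have "(\<Sum>\<sigma>\<in>{\<sigma>\<in>S. m \<sigma> < 0}. w \<sigma> * exp (y * n * m \<sigma>)) \<le> (\<Sum>\<sigma>\<in>S. w \<sigma> * exp (0 * n * m \<sigma>))"
    by (rule neg_part_le) (use assms y0 in auto)
  ultimately have d: "(\<Sum>\<sigma>\<in>S. w \<sigma> * exp (y * n * m \<sigma>)) - (\<Sum>\<sigma>\<in>S. w \<sigma> * exp (0 * n * m \<sigma>))
      \<le> (\<Sum>\<sigma>\<in>P. w \<sigma> * exp (y * n * m \<sigma>))" by linarith
  have "exp (- (c * (real p - 1) * a ^ p * n)) *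
     ((\<Sum>\<sigma>\<in>S. w \<sigma> * exp (y * n * m \<sigma>)) - (\<Sum>\<sigma>\<in>S. w \<sigma> * exp (0 * n * m \<sigma>)))
     \<le> exp (- (c * (real p - 1) * a ^ p * n)) * (\<Sum>\<sigma>\<in>P. w \<sigma> * exp (y * n * m \<sigma>))"
    using d by (intro mult_left_mono) auto
  also have "\<dots> = (\<Sum>\<sigma>\<in>P. w \<sigma> * (exp (- (c * (real p - 1) * a ^ p * n)) * exp (y * n * m \<sigma>)))"
    unfolding sum_distrib_left by (simp add: ac_simps)
  also have "\<dots> \<le> (\<Sum>\<sigma>\<in>P. w \<sigma> * exp (c * n * m \<sigma> ^ p))"
  proof (rule sum_mono)
    fix \<sigma> assume s: "\<sigma> \<in> P"
    have t: "real p * a ^ (p - 1) * m \<sigma> - (real p - 1) * a ^ p \<le> m \<sigma> ^ p"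
      using tangent_ineq[OF assms(4), of "m \<sigma>" p] s unfolding P_def by simp
    have "c * n * (real p * a ^ (p - 1) * m \<sigma> - (real p - 1) * a ^ p) \<le> c * n * m \<sigma> ^ p"
      using t assms by (intro mult_left_mono) auto
    hence "- (c * (real p - 1) * a ^ p * n) + y * n * m \<sigma> \<le> c * n * m \<sigma> ^ p"
      unfolding y_def by (simp add: algebra_simps)
    hence "exp (- (c * (real p - 1) * a ^ p * n)) * exp (y * n * m \<sigma>) \<le> exp (c * n * m \<sigma> ^ p)"
      by (simp flip: exp_add)
    thus "w \<sigma> * (exp (- (c * (real p - 1) * a ^ p * n)) * exp (y * n * m \<sigma>)) \<le> w \<sigma> * exp (c * n * m \<sigma> ^ p)"
      using assms(2)[of \<sigma>] s unfolding P_def by (intro mult_left_mono) auto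
  qed
  also have "\<dots> \<le> (\<Sum>\<sigma>\<in>S. w \<sigma> * exp (c * n * m \<sigma> ^ p))"
    by (rule sum_mono2) (use assms in \<open>auto simp: P_def intro: less_imp_le\<close>)
  finally show ?thesis unfolding y_def .
qed



lemma upper_N:
  fixes w m :: "'a \<Rightarrow> real" and c n :: real and K p :: nat
  assumes fin: "finite S" and wpos: "\<And>\<sigma>. \<sigma> \<in> S \<Longrightarrow> 0 < w \<sigma>"
    and mb: "\<And>\<sigma>. \<sigma> \<in> S \<Longrightarrow> \<bar>m \<sigma>\<bar> \<le> 1" and n0: "n \<ge> 0" and c0: "c \<ge> 0" and K1: "K \<ge> 1"
    and sym: "odd p \<or> (\<exists>\<iota>. \<iota> ` S \<subseteq> S \<and> (\<forall>\<sigma>\<in>S. \<iota> (\<iota> \<sigma>) = \<sigma> \<and> w (\<iota> \<sigma>) = w \<sigma> \<and> m (\<iota> \<sigma>) = - m \<sigma>))"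
  shows "(\<Sum>\<sigma>\<in>S. w \<sigma> * exp (c * n * m \<sigma> ^ p)) \<le>
    2 * (\<Sum>k<K. exp (n * (c * ((real k + 1) / real K) ^ p
            - c * real p * (real k / real K) ^ (p - 1) * (real k / real K)))
         * (\<Sum>\<sigma>\<in>S. w \<sigma> * exp (c * real p * (real k / real K) ^ (p - 1) * n * m \<sigma>)))
    + (\<Sum>\<sigma>\<in>S. w \<sigma> * exp (0 * n * m \<sigma>))"
proof -
  define E where "E \<sigma> = w \<sigma> * exp (c * n * m \<sigma> ^ p)" for \<sigma>
  define f where "f k = exp (n * (c * ((real k + 1) / real K) ^ p
            - c * real p * (real k / real K) ^ (p - 1) * (real k / real K)))" for k :: nat
  define yk where "yk k = c * real p * (real k / real K) ^ (p - 1)" for k :: nat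
  define P where "P = {\<sigma>\<in>S. 0 \<le> m \<sigma>}"
  define Q where "Q = {\<sigma>\<in>S. m \<sigma> < 0}"
  define B where "B = (\<Sum>k<K. f k * (\<Sum>\<sigma>\<in>S. w \<sigma> * exp (yk k * n * m \<sigma>)))"
  define Z0 where "Z0 = (\<Sum>\<sigma>\<in>S. w \<sigma> * exp (0 * n * m \<sigma>))"
  have E0: "0 \<le> E \<sigma>" if "\<sigma> \<in> S" for \<sigma> using wpos[OF that] unfolding E_def by simp
  have split: "(\<Sum>\<sigma>\<in>S. E \<sigma>) = (\<Sum>\<sigma>\<in>P. E \<sigma>) + (\<Sum>\<sigma>\<in>Q. E \<sigma>)"
    unfolding P_def Q_def by (rule split_PQ[OF fin])
  have hB: "(\<Sum>\<sigma>\<in>S. w \<sigma> * (\<Sum>k<K. f k * exp (yk k * n * m \<sigma>))) = B"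
  proof -
    have "(\<Sum>\<sigma>\<in>S. w \<sigma> * (\<Sum>k<K. f k * exp (yk k * n * m \<sigma>)))
        = (\<Sum>\<sigma>\<in>S. \<Sum>k<K. f k * (w \<sigma> * exp (yk k * n * m \<sigma>)))"
      by (simp add: sum_distrib_left ac_simps)
    also have "\<dots> = (\<Sum>k<K. \<Sum>\<sigma>\<in>S. f k * (w \<sigma> * exp (yk k * n * m \<sigma>)))"
      by (rule sum.swap)
    also have "\<dots> = B" unfolding B_def by (simp add: sum_distrib_left)
    finally show ?thesis .
  qed
  have hP: "(\<Sum>\<sigma>\<in>P. E \<sigma>) \<le> B"
  proof -
    have "(\<Sum>\<sigma>\<in>P. E \<sigma>) \<le> (\<Sum>\<sigma>\<in>P. w \<sigma> * (\<Sum>k<K. f k * exp (yk k * n * m \<sigma>)))"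
    proof (rule sum_mono)
      fix \<sigma> assume s: "\<sigma> \<in> P"
      have "exp (c * n * m \<sigma> ^ p) \<le> (\<Sum>k<K. f k * exp (yk k * n * m \<sigma>))"
        unfolding f_def yk_def
        by (rule window_pt) (use s mb[of \<sigma>] n0 c0 K1 in \<open>auto simp: P_def\<close>)
      thus "E \<sigma> \<le> w \<sigma> * (\<Sum>k<K. f k * exp (yk k * n * m \<sigma>))"
        unfolding E_def using wpos[of \<sigma>] s by (intro mult_left_mono) (auto simp: P_def)
    qed
    also have "\<dots> \<le> (\<Sum>\<sigma>\<in>S. w \<sigma> * (\<Sum>k<K. f k * exp (yk k * n * m \<sigma>)))"
    proof (rule sum_mono2[OF fin])
      show "P \<subseteq> S" unfolding P_def by auto
      fix \<sigma> assume "\<sigma> \<in> S - P"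
      hence "0 < w \<sigma>" using wpos by auto
      moreover have "0 \<le> (\<Sum>k<K. f k * exp (yk k * n * m \<sigma>))"
        unfolding f_def by (intro sum_nonneg) simp
      ultimately show "0 \<le> w \<sigma> * (\<Sum>k<K. f k * exp (yk k * n * m \<sigma>))" by simp
    qed
    finally show ?thesis using hB by simp
  qed
  have hQ: "(\<Sum>\<sigma>\<in>Q. E \<sigma>) \<le> (\<Sum>\<sigma>\<in>P. E \<sigma>) + Z0"
  proof (cases "odd p")
    case True
    hence op: "odd p" .
    have "(\<Sum>\<sigma>\<in>Q. E \<sigma>) \<le> (\<Sum>\<sigma>\<in>Q. w \<sigma> * exp (0 * n * m \<sigma>))"
    proof (rule sum_mono)
      fix \<sigma> assume s: "\<sigma> \<in> Q"
      have "m \<sigma> ^ p < 0" using s op unfolding Q_def by (simp add: power_less_zero_eq)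
      hence "c * n * m \<sigma> ^ p \<le> 0" using c0 n0
        by (intro mult_nonneg_nonpos) (auto intro: less_imp_le)
      hence "exp (c * n * m \<sigma> ^ p) \<le> exp (0 * n * m \<sigma>)" by simp
      thus "E \<sigma> \<le> w \<sigma> * exp (0 * n * m \<sigma>)"
        unfolding E_def using wpos[of \<sigma>] s by (intro mult_left_mono) (auto simp: Q_def)
    qed
    also have "\<dots> \<le> Z0" unfolding Z0_def
      by (rule sum_mono2[OF fin]) (use wpos in \<open>auto simp: Q_def intro: less_imp_le\<close>)
    moreover have "0 \<le> (\<Sum>\<sigma>\<in>P. E \<sigma>)" by (rule sum_nonneg) (use E0 in \<open>auto simp: P_def\<close>)
    ultimately show ?thesis by linarith
  next
    case False
    hence ev: "even p" by simp
    then obtain \<iota> where io: "\<iota> ` S \<subseteq> S" "\<And>\<sigma>. \<sigma> \<in> S \<Longrightarrow> \<iota> (\<iota> \<sigma>) = \<sigma> \<and> w (\<iota> \<sigma>) = w \<sigma> \<and> m (\<iota> \<sigma>) = - m \<sigma>"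
      using sym by blast
    have inj: "inj_on \<iota> Q"
    proof (rule inj_onI)
      fix x y assume "x \<in> Q" "y \<in> Q" "\<iota> x = \<iota> y"
      hence xs: "x \<in> S" "y \<in> S" unfolding Q_def by auto
      have "x = \<iota> (\<iota> x)" using io(2)[OF xs(1)] by simp
      also have "\<dots> = \<iota> (\<iota> y)" using \<open>\<iota> x = \<iota> y\<close> by simp
      also have "\<dots> = y" using io(2)[OF xs(2)] by simp
      finally show "x = y" .
    qed
    have Eio: "E (\<iota> \<sigma>) = E \<sigma>" if "\<sigma> \<in> S" for \<sigma>
      using io(2)[OF that] ev unfolding E_def by simp
    have "(\<Sum>\<sigma>\<in>\<iota> ` Q. E \<sigma>) = (\<Sum>\<sigma>\<in>Q. E (\<iota> \<sigma>))"
      using sum.reindex[OF inj, of E] by simp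
    also have "\<dots> = (\<Sum>\<sigma>\<in>Q. E \<sigma>)" by (rule sum.cong) (auto simp: Eio Q_def)
    finally have r: "(\<Sum>\<sigma>\<in>Q. E \<sigma>) = (\<Sum>\<sigma>\<in>\<iota> ` Q. E \<sigma>)" ..
    have sub: "\<iota> ` Q \<subseteq> P"
    proof
      fix x assume "x \<in> \<iota> ` Q"
      then obtain \<sigma> where s: "\<sigma> \<in> Q" "x = \<iota> \<sigma>" by blast
      hence "\<sigma> \<in> S" "m \<sigma> < 0" unfolding Q_def by auto
      thus "x \<in> P" using io s unfolding P_def by auto
    qed
    have "(\<Sum>\<sigma>\<in>\<iota> ` Q. E \<sigma>) \<le> (\<Sum>\<sigma>\<in>P. E \<sigma>)"
      by (rule sum_mono2) (use fin sub E0 in \<open>auto simp: P_def\<close>)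
    moreover have "0 \<le> Z0" unfolding Z0_def using wpos by (intro sum_nonneg) (auto intro: less_imp_le)
    ultimately show ?thesis using r by linarith
  qed
  have "(\<Sum>\<sigma>\<in>S. E \<sigma>) \<le> 2 * B + Z0" using split hP hQ by linarith
  thus ?thesis unfolding E_def B_def Z0_def f_def yk_def .
qed



context
  fixes S :: "nat \<Rightarrow> 'a set" and w m :: "nat \<Rightarrow> 'a \<Rightarrow> real"
    and F :: "real \<Rightarrow> real" and c :: real and p :: nat
  assumes p2: "p \<ge> 2" and cpos: "c > 0"
    and fin: "\<And>N. finite (S N)" and ne: "\<And>N. S N \<noteq> {}"
    and wpos: "\<And>N \<sigma>. \<sigma> \<in> S N \<Longrightarrow> 0 < w N \<sigma>"
    and mb: "\<And>N \<sigma>. \<sigma> \<in> S N \<Longrightarrow> \<bar>m N \<sigma>\<bar> \<le> 1"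
    and sym: "odd p \<or> (\<forall>N. \<exists>\<iota>. \<iota> ` S N \<subseteq> S N \<and> (\<forall>\<sigma>\<in>S N. \<iota> (\<iota> \<sigma>) = \<sigma> \<and> w N (\<iota> \<sigma>) = w N \<sigma> \<and> m N (\<iota> \<sigma>) = - m N \<sigma>))"
    and conv: "\<And>q. q \<in> \<rat> \<Longrightarrow> (\<lambda>N. ln (\<Sum>\<sigma>\<in>S N. w N \<sigma> * exp (c * real p * q ^ (p - 1) * real N * m N \<sigma>)) / real N)
                  \<longlonglongrightarrow> F (c * real p * q ^ (p - 1))"
    and Fcont: "\<And>y. isCont F y"
    and incr: "\<And>y. y > 0 \<Longrightarrow> F 0 < F y"
begin

definition "ZF N y = (\<Sum>\<sigma>\<in>S N. w N \<sigma> * exp (y * real N * m N \<sigma>))"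
definition "FNs N y = ln (ZF N y) / real N"
definition "ZZ N = (\<Sum>\<sigma>\<in>S N. w N \<sigma> * exp (c * real N * m N \<sigma> ^ p))"
definition "GG t = F (c * real p * t ^ (p - 1)) - c * (real p - 1) * t ^ p"

lemma ZF_pos: "0 < ZF N y"
  unfolding ZF_def by (rule sum_pos) (use fin ne wpos in auto)

lemma ZZ_pos: "0 < ZZ N"
  unfolding ZZ_def by (rule sum_pos) (use fin ne wpos in auto)

lemma ZF_exp: "N > 0 \<Longrightarrow> ZF N y = exp (real N * FNs N y)"
  unfolding FNs_def using ZF_pos[of N y] by simp

lemma convF: "q \<in> \<rat> \<Longrightarrow> (\<lambda>N. FNs N (c * real p * q ^ (p - 1))) \<longlonglongrightarrow> F (c * real p * q ^ (p - 1))"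
  unfolding FNs_def ZF_def by (rule conv)

lemma conv0: "(\<lambda>N. FNs N 0) \<longlonglongrightarrow> F 0"
proof -
  have z: "(0::real) ^ (p - 1) = 0" using p2 by (intro zero_power) simp
  have "(\<lambda>N. FNs N (c * real p * 0 ^ (p - 1))) \<longlonglongrightarrow> F (c * real p * 0 ^ (p - 1))"
    by (rule convF) simp
  thus ?thesis by (simp only: z mult_zero_right)
qed

lemma GG0: "GG 0 = F 0"
proof -
  have z: "(0::real) ^ (p - 1) = 0" "(0::real) ^ p = 0" using p2 by (intro zero_power; simp)+
  show ?thesis unfolding GG_def z by simp
qed

lemma det_lower:
  assumes q: "q \<in> \<rat>" "0 < q" "q \<le> 1" and e: "\<epsilon> > 0"
  shows "eventually (\<lambda>N. GG q - \<epsilon> < ln (ZZ N) / real N) sequentially"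
proof -
  define y where "y = c * real p * q ^ (p - 1)"
  have ypos: "y > 0" unfolding y_def using cpos q p2 by simp
  define d where "d = F y - F 0"
  have dpos: "d > 0" unfolding d_def using incr[OF ypos] by simp
  define e where "e = min \<epsilon> d / 3"
  have epos: "e > 0" unfolding e_def using dpos \<open>\<epsilon>>0\<close> by simp
  have e3d: "3 * e \<le> d" "3 * e \<le> \<epsilon>" unfolding e_def by auto
  have ev1: "eventually (\<lambda>N. F y - e < FNs N y) sequentially"
    using order_tendstoD(1)[OF convF[OF q(1)]] epos unfolding y_def by simp
  have ev2: "eventually (\<lambda>N. FNs N 0 < F 0 + e) sequentially"
    using order_tendstoD(2)[OF conv0] epos by simp
  have ev3: "eventually (\<lambda>N. ln 2 / real N < e) sequentially"
    using order_tendstoD(2)[OF lim_const_over_n[where a="ln (2::real)"]] epos by simp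
  have ev4: "eventually (\<lambda>N. (1::nat) \<le> N) sequentially" by (rule eventually_ge_at_top)
  show ?thesis using ev1 ev2 ev3 ev4
  proof eventually_elim
    case (elim N)
    define n where "n = real N"
    have npos: "n > 0" unfolding n_def using elim by simp
    have "FNs N 0 + ln 2 / n < FNs N y"
      using elim e3d unfolding d_def n_def by linarith
    hence "n * (FNs N 0 + ln 2 / n) < n * FNs N y" using npos by simp
    hence lt: "n * FNs N 0 < n * FNs N y - ln 2" using npos by (simp add: algebra_simps)
    have Z0: "ZF N 0 = exp (n * FNs N 0)" using ZF_exp elim unfolding n_def by simp
    have Zy: "ZF N y = exp (n * FNs N y)" using ZF_exp elim unfolding n_def by simp
    have "ZF N 0 \<le> exp (n * FNs N y - ln 2)" unfolding Z0 using lt by simp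
    also have "\<dots> = ZF N y / 2" unfolding Zy by (simp add: exp_diff)
    finally have half: "ZF N y / 2 \<le> ZF N y - ZF N 0" by simp
    have low: "exp (- (c * (real p - 1) * q ^ p * n)) * (ZF N y - ZF N 0) \<le> ZZ N"
      using lower_N[where S="S N" and w="w N" and m="m N" and n=n and a=q and c=c and p=p] fin wpos npos q cpos
      unfolding ZF_def ZZ_def y_def n_def by simp
    have "exp (- (c * (real p - 1) * q ^ p * n) + n * FNs N y - ln 2)
        = exp (- (c * (real p - 1) * q ^ p * n)) * (ZF N y / 2)"
      unfolding Zy by (simp add: exp_diff exp_add exp_minus field_simps)
    also have "\<dots> \<le> exp (- (c * (real p - 1) * q ^ p * n)) * (ZF N y - ZF N 0)"
      using half by (intro mult_left_mono) auto
    also have "\<dots> \<le> ZZ N" by (rule low)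
    finally have "ln (exp (- (c * (real p - 1) * q ^ p * n) + n * FNs N y - ln 2)) \<le> ln (ZZ N)"
      using ZZ_pos by (subst ln_le_cancel_iff) auto
    hence "- (c * (real p - 1) * q ^ p * n) + n * FNs N y - ln 2 \<le> ln (ZZ N)" by simp
    hence "(- (c * (real p - 1) * q ^ p * n) + n * FNs N y - ln 2) / n \<le> ln (ZZ N) / n"
      using npos by (simp add: divide_right_mono)
    hence "- (c * (real p - 1) * q ^ p) + FNs N y - ln 2 / n \<le> ln (ZZ N) / n"
      using npos by (simp add: field_simps)
    moreover have "GG q - \<epsilon> < - (c * (real p - 1) * q ^ p) + FNs N y - ln 2 / n"
      using elim e3d epos unfolding GG_def y_def[symmetric] n_def by linarith
    ultimately show ?case unfolding n_def by linarith
  qed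
qed


lemma det_upper:
  assumes K1: "K \<ge> 1" and e: "\<epsilon> > 0" and mx: "\<forall>t\<in>{0..1}. GG t \<le> GG m0"
  shows "eventually (\<lambda>N. ln (ZZ N) / real N < GG m0 + c * real p / real K + \<epsilon>) sequentially"
proof -
  define W where "W = GG m0 + c * real p / real K"
  define yk where "yk k = c * real p * (real k / real K) ^ (p - 1)" for k :: nat
  define ak where "ak k = c * ((real k + 1) / real K) ^ p
            - c * real p * (real k / real K) ^ (p - 1) * (real k / real K)" for k :: nat
  have Kpos: "real K > 0" using K1 by simp
  have bound: "ak k + F (yk k) \<le> W" if k: "k < K" for k
  proof -
    define u where "u = real k / real K"
    define u' where "u' = (real k + 1) / real K"
    have u0: "0 \<le> u" unfolding u_def by simp
    have uu': "u \<le> u'" unfolding u_def u'_def using Kpos by (simp add: divide_right_mono)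
    have u'1: "u' \<le> 1" unfolding u'_def using k Kpos by (simp add: divide_le_eq)
    have "u' - u = 1 / real K" unfolding u_def u'_def using Kpos by (simp add: field_simps)
    hence pd: "u' ^ p - u ^ p \<le> real p / real K" using pow_diff_le[OF u0 uu' u'1, of p] by simp
    have pm: "u ^ (p - 1) * u = u ^ p" using p2 by (cases p) (simp_all add: power_Suc2)
    have gu: "GG u \<le> GG m0" using mx u0 uu' u'1 by auto
    have "ak k + F (yk k) = GG u + c * (u' ^ p - u ^ p)"
      unfolding ak_def yk_def GG_def u_def[symmetric] u'_def[symmetric]
      using pm by (simp add: algebra_simps)
    also have "\<dots> \<le> GG m0 + c * (real p / real K)"
      using gu pd cpos by (intro add_mono mult_left_mono) auto
    finally show ?thesis unfolding W_def by simp
  qed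
  have ev1: "eventually (\<lambda>N. \<forall>k\<in>{..<K}. FNs N (yk k) < F (yk k) + \<epsilon> / 2) sequentially"
  proof (rule eventually_ball_finite)
    show "finite {..<K}" by simp
    show "\<forall>k\<in>{..<K}. eventually (\<lambda>N. FNs N (yk k) < F (yk k) + \<epsilon> / 2) sequentially"
    proof
      fix k assume "k \<in> {..<K}"
      have "real k / real K \<in> \<rat>" by (intro Rats_divide Rats_of_nat)
      from convF[OF this] show "eventually (\<lambda>N. FNs N (yk k) < F (yk k) + \<epsilon> / 2) sequentially"
        unfolding yk_def using e by (intro order_tendstoD(2)) auto
    qed
  qed
  have ev2: "eventually (\<lambda>N. FNs N 0 < F 0 + \<epsilon> / 2) sequentially"
    using order_tendstoD(2)[OF conv0] e by simp
  have ev3: "eventually (\<lambda>N. ln (2 * real K + 1) / real N < \<epsilon> / 2) sequentially"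
    by (rule order_tendstoD(2)[OF lim_const_over_n[where a="ln (2 * real K + 1)"]]) (use e in simp)
  have ev4: "eventually (\<lambda>N. (1::nat) \<le> N) sequentially" by (rule eventually_ge_at_top)
  show ?thesis using ev1 ev2 ev3 ev4
  proof eventually_elim
    case (elim N)
    define n where "n = real N"
    have npos: "n > 0" unfolding n_def using elim by simp
    define X where "X = exp (n * (W + \<epsilon> / 2))"
    have hterm: "exp (n * ak k) * ZF N (yk k) \<le> X" if k: "k < K" for k
    proof -
      have "exp (n * ak k) * ZF N (yk k) = exp (n * ak k + n * FNs N (yk k))"
        using ZF_exp[of N "yk k"] elim unfolding n_def by (simp add: exp_add)
      also have "\<dots> \<le> X" unfolding X_def
      proof (subst exp_le_cancel_iff)
        have "FNs N (yk k) < F (yk k) + \<epsilon> / 2" using elim k by auto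
        hence "ak k + FNs N (yk k) \<le> W + \<epsilon> / 2" using bound[OF k] by linarith
        hence "n * (ak k + FNs N (yk k)) \<le> n * (W + \<epsilon> / 2)" using npos by (intro mult_left_mono) auto
        thus "n * ak k + n * FNs N (yk k) \<le> n * (W + \<epsilon> / 2)" by (simp add: algebra_simps)
      qed
      finally show ?thesis .
    qed
    have z0: "ZF N 0 \<le> X"
    proof -
      have "GG 0 \<le> GG m0" using mx by auto
      hence "F 0 \<le> W" unfolding W_def using GG0 cpos Kpos by (simp add: add_increasing2)
      hence "FNs N 0 \<le> W + \<epsilon> / 2" using elim by linarith
      hence "n * FNs N 0 \<le> n * (W + \<epsilon> / 2)" using npos by (intro mult_left_mono) auto
      thus ?thesis unfolding X_def using ZF_exp[of N 0] elim unfolding n_def by simp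
    qed
    have up: "ZZ N \<le> 2 * (\<Sum>k<K. exp (n * ak k) * ZF N (yk k)) + ZF N 0"
      using upper_N[where S="S N" and w="w N" and m="m N" and n=n and c=c and K=K and p=p]
        fin wpos mb npos cpos K1 sym
      unfolding ZZ_def ZF_def ak_def yk_def n_def by auto
    have "(\<Sum>k<K. exp (n * ak k) * ZF N (yk k)) \<le> (\<Sum>k<K. X)" by (rule sum_mono) (use hterm in auto)
    hence "ZZ N \<le> (2 * real K + 1) * X" using up z0 by (simp add: algebra_simps)
    hence "ln (ZZ N) \<le> ln ((2 * real K + 1) * X)" using ZZ_pos[of N] by (intro ln_mono) auto
    also have "\<dots> = ln (2 * real K + 1) + n * (W + \<epsilon> / 2)" unfolding X_def
      by (subst ln_mult) auto
    finally have "ln (ZZ N) / n \<le> (ln (2 * real K + 1) + n * (W + \<epsilon> / 2)) / n"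
      using npos by (simp add: divide_right_mono)
    also have "\<dots> = ln (2 * real K + 1) / n + (W + \<epsilon> / 2)" using npos by (simp add: field_simps)
    finally show ?case using elim unfolding n_def W_def by linarith
  qed
qed


lemma GG_cont: "isCont GG t"
proof -
  have e: "GG = (\<lambda>t. F (c * real p * t ^ (p - 1)) - c * (real p - 1) * t ^ p)"
    by (rule ext) (simp add: GG_def)
  have "isCont (\<lambda>t. c * real p * t ^ (p - 1)) t" by (intro continuous_intros)
  hence "isCont (\<lambda>t. F (c * real p * t ^ (p - 1))) t" by (rule isCont_o2) (rule Fcont)
  hence "isCont (\<lambda>t. F (c * real p * t ^ (p - 1)) - c * (real p - 1) * t ^ p) t"
    by (intro continuous_intros)
  thus ?thesis unfolding e .
qed

lemma det_conv:
  assumes m0: "0 \<le> m0" "m0 \<le> 1" and mx: "\<forall>t\<in>{0..1}. GG t \<le> GG m0"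
  shows "(\<lambda>N. ln (ZZ N) / real N) \<longlonglongrightarrow> GG m0"
proof (rule order_tendstoI)
  fix a assume a: "a < GG m0"
  obtain \<delta> where d: "\<delta> > 0" "\<And>x. dist x m0 < \<delta> \<Longrightarrow> dist (GG x) (GG m0) < GG m0 - a"
    using GG_cont[of m0] a unfolding continuous_at_eps_delta by (meson diff_gt_0_iff_gt)
  have "max 0 (m0 - \<delta>) < min 1 (m0 + \<delta>)" using d(1) m0 by auto
  then obtain q where q: "q \<in> \<rat>" "max 0 (m0 - \<delta>) < q" "q < min 1 (m0 + \<delta>)"
    using Rats_dense_in_real by blast
  have "dist q m0 < \<delta>" using q unfolding dist_real_def by auto
  hence "dist (GG q) (GG m0) < GG m0 - a" by (rule d(2))
  hence gq: "a < GG q" unfolding dist_real_def by auto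
  have "eventually (\<lambda>N. GG q - (GG q - a) < ln (ZZ N) / real N) sequentially"
    by (rule det_lower) (use q gq in auto)
  thus "eventually (\<lambda>N. a < ln (ZZ N) / real N) sequentially" by simp
next
  fix a assume a: "GG m0 < a"
  define e0 where "e0 = a - GG m0"
  have e0: "e0 > 0" unfolding e0_def using a by simp
  define x where "x = 2 * c * real p / e0"
  define K where "K = nat \<lceil>x\<rceil> + 1"
  have K1: "K \<ge> 1" unfolding K_def by simp
  have "x \<ge> 0" unfolding x_def using cpos e0 by simp
  hence "real K > x" unfolding K_def by linarith
  hence "e0 * real K > e0 * x" using e0 by simp
  hence "e0 * real K > 2 * c * real p" unfolding x_def using e0 by simp
  hence ck: "c * real p / real K < e0 / 2" using K1 by (simp add: field_simps)
  have "eventually (\<lambda>N. ln (ZZ N) / real N < GG m0 + c * real p / real K + e0 / 2) sequentially"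
    by (rule det_upper) (use K1 e0 mx in auto)
  thus "eventually (\<lambda>N. ln (ZZ N) / real N < a) sequentially"
    by eventually_elim (use ck e0_def in linarith)
qed


lemma det_conv':
  assumes m0: "0 \<le> m0" "m0 \<le> 1"
    and mx: "\<forall>t\<in>{0..1}. F (c * real p * t ^ (p - 1)) - c * (real p - 1) * t ^ p
                 \<le> F (c * real p * m0 ^ (p - 1)) - c * (real p - 1) * m0 ^ p"
  shows "(\<lambda>N. ln (\<Sum>\<sigma>\<in>S N. w N \<sigma> * exp (c * real N * m N \<sigma> ^ p)) / real N)
           \<longlonglongrightarrow> F (c * real p * m0 ^ (p - 1)) - c * (real p - 1) * m0 ^ p"
  using det_conv[OF m0] mx unfolding ZZ_def GG_def by simp

end


lemma cfg_fin: "finite (cfg N)" unfolding cfg_def by (intro finite_PiE) auto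

lemma cfg_ne: "cfg N \<noteq> {}"
proof -
  have "(\<lambda>i. if i < N then 1 else undefined) \<in> cfg N" unfolding cfg_def by (auto simp: PiE_iff extensional_def)
  thus ?thesis by blast
qed

lemma cfg_vals: "\<sigma> \<in> cfg N \<Longrightarrow> i < N \<Longrightarrow> \<sigma> i \<in> {-1, 1}"
  unfolding cfg_def by (auto simp: PiE_iff)

lemma mag_bound:
  assumes "\<sigma> \<in> cfg N" "\<And>i. h i \<in> {-1, 1}"
  shows "\<bar>mag N h \<sigma>\<bar> \<le> 1"
proof (cases "N = 0")
  case True thus ?thesis unfolding mag_def by simp
next
  case False
  hence Np: "real N > 0" by simp
  have one: "\<bar>h i * \<sigma> i\<bar> = 1" if "i \<in> {..<N}" for i
  proof -
    have s: "\<bar>\<sigma> i\<bar> = 1" using cfg_vals[OF assms(1), of i] that by auto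
    have "\<bar>h i\<bar> = 1" using assms(2)[of i] by auto
    thus ?thesis using s by (simp add: abs_mult)
  qed
  have "\<bar>\<Sum>i<N. h i * \<sigma> i\<bar> \<le> (\<Sum>i<N. \<bar>h i * \<sigma> i\<bar>)" by (rule sum_abs)
  also have "\<dots> = (\<Sum>i<N. (1::real))" by (rule sum.cong) (auto simp: one)
  finally have b: "\<bar>\<Sum>i<N. h i * \<sigma> i\<bar> \<le> real N" by simp
  have "\<bar>mag N h \<sigma>\<bar> = \<bar>\<Sum>i<N. h i * \<sigma> i\<bar> / real N" unfolding mag_def using Np by (simp add: abs_divide)
  also have "\<dots> \<le> real N / real N" using b Np by (intro divide_right_mono) auto
  also have "\<dots> = 1" using Np by simp
  finally show ?thesis .
qed

definition flip :: "nat \<Rightarrow> (nat \<Rightarrow> real) \<Rightarrow> (nat \<Rightarrow> real)" where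
  "flip N \<sigma> = (\<lambda>i. if i < N then - \<sigma> i else \<sigma> i)"

lemma flip_cfg: "\<sigma> \<in> cfg N \<Longrightarrow> flip N \<sigma> \<in> cfg N"
  unfolding cfg_def flip_def by (auto simp: PiE_iff extensional_def)

lemma flip_flip: "flip N (flip N \<sigma>) = \<sigma>"
  unfolding flip_def by auto

lemma flip_mag: "mag N h (flip N \<sigma>) = - mag N h \<sigma>"
  unfolding mag_def flip_def by (simp add: sum_negf)

lemma flip_Ham:
  assumes "even p"
  shows "Ham p N g (flip N \<sigma>) = Ham p N g \<sigma>"
proof -
  have "(\<Prod>j<p. flip N \<sigma> (l ! j)) = (\<Prod>j<p. \<sigma> (l ! j))" if l: "l \<in> idx p N" for l
  proof -
    have "(\<Prod>j<p. flip N \<sigma> (l ! j)) = (\<Prod>j<p. (-1) * \<sigma> (l ! j))"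
    proof (rule prod.cong)
      fix j assume "j \<in> {..<p}"
      hence "l ! j \<in> set l" using l unfolding idx_def by auto
      hence "l ! j < N" using l unfolding idx_def by auto
      thus "flip N \<sigma> (l ! j) = (-1) * \<sigma> (l ! j)" unfolding flip_def by simp
    qed simp
    also have "\<dots> = (\<Prod>j<p. (-1::real)) * (\<Prod>j<p. \<sigma> (l ! j))" by (rule prod.distrib)
    also have "(\<Prod>j<p. (-1::real)) = 1" using assms by simp
    finally have "(\<Prod>j<p. flip N \<sigma> (l ! j)) = 1 * (\<Prod>j<p. \<sigma> (l ! j))" .
    thus ?thesis by simp
  qed
  thus ?thesis unfolding Ham_def by (simp cong: sum.cong)
qed


lemma main_c:
  fixes M :: "'w measure" and p :: nat
    and g :: "nat list \<Rightarrow> 'w \<Rightarrow> real" and h :: "nat \<Rightarrow> 'w \<Rightarrow> real"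
    and F :: "real \<Rightarrow> real \<Rightarrow> real" and \<beta> c :: real
  assumes p2: "p \<ge> 2"
    and sign_vals: "\<And>i \<omega>. \<omega> \<in> space M \<Longrightarrow> h i \<omega> \<in> {-1, 1}"
    and F_lim: "\<And>b y. AE \<omega> in M.
          (\<lambda>N. FN p N (\<lambda>l. g l \<omega>) (\<lambda>i. h i \<omega>) b y) \<longlonglongrightarrow> F b y"
    and F_diff: "\<And>b y. F b differentiable (at y)"
    and F_deriv_pos: "\<And>b y. y > 0 \<Longrightarrow> deriv (F b) y > 0"
    and cpos: "c > 0"
  shows "\<exists>m0\<in>{0..1}. (\<forall>m\<in>{0..1}. F \<beta> (c * real p * m ^ (p - 1)) - c * (real p - 1) * m ^ p
                 \<le> F \<beta> (c * real p * m0 ^ (p - 1)) - c * (real p - 1) * m0 ^ p) \<and>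
          (AE \<omega> in M. (\<lambda>N. ln (\<Sum>\<sigma>\<in>cfg N. 2 powr (- real N) *
              exp (\<beta> / sqrt 2 * Ham p N (\<lambda>l. g l \<omega>) \<sigma> + c * real N * mag N (\<lambda>i. h i \<omega>) \<sigma> ^ p)) / real N)
             \<longlonglongrightarrow> F \<beta> (c * real p * m0 ^ (p - 1)) - c * (real p - 1) * m0 ^ p)"
proof -
  define G where "G t = F \<beta> (c * real p * t ^ (p - 1)) - c * (real p - 1) * t ^ p" for t
  have Fc: "isCont (F \<beta>) y" for y
    using F_diff[of \<beta> y] by (simp add: differentiable_imp_continuous_within)
  have incr: "F \<beta> 0 < F \<beta> y" if y: "y > 0" for y
  proof -
    have "\<And>x. 0 \<le> x \<Longrightarrow> x \<le> y \<Longrightarrow> (F \<beta> has_real_derivative deriv (F \<beta>) x) (at x)"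
      using F_diff DERIV_deriv_iff_real_differentiable by blast
    then obtain z where z: "0 < z" "z < y" "F \<beta> y - F \<beta> 0 = (y - 0) * deriv (F \<beta>) z"
      using MVT2[of 0 y "F \<beta>" "\<lambda>x. deriv (F \<beta>) x"] y by blast
    have "deriv (F \<beta>) z > 0" using F_deriv_pos z by blast
    hence "(y - 0) * deriv (F \<beta>) z > 0" using y by simp
    thus ?thesis using z by simp
  qed
  have Gc: "isCont G t" for t
  proof -
    have e: "G = (\<lambda>t. F \<beta> (c * real p * t ^ (p - 1)) - c * (real p - 1) * t ^ p)"
      by (rule ext) (simp add: G_def)
    have "isCont (\<lambda>t. c * real p * t ^ (p - 1)) t" by (intro continuous_intros)
    hence "isCont (\<lambda>t. F \<beta> (c * real p * t ^ (p - 1))) t" by (rule isCont_o2) (rule Fc)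
    hence "isCont (\<lambda>t. F \<beta> (c * real p * t ^ (p - 1)) - c * (real p - 1) * t ^ p) t"
      by (intro continuous_intros)
    thus ?thesis unfolding e .
  qed
  have "continuous_on {0..1} G" by (intro continuous_at_imp_continuous_on) (use Gc in auto)
  then obtain m0 where m0: "m0 \<in> {0..1}" "\<forall>t\<in>{0..1}. G t \<le> G m0"
    using continuous_attains_sup[of "{0..1::real}" G] by auto
  have AE1: "AE \<omega> in M. \<forall>q\<in>\<rat>. (\<lambda>N. FN p N (\<lambda>l. g l \<omega>) (\<lambda>i. h i \<omega>) \<beta> (c * real p * q ^ (p - 1)))
                  \<longlonglongrightarrow> F \<beta> (c * real p * q ^ (p - 1))"
    by (subst AE_ball_countable[OF countable_rat]) (use F_lim in blast)
  have "AE \<omega> in M. (\<lambda>N. ln (\<Sum>\<sigma>\<in>cfg N. 2 powr (- real N) *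
              exp (\<beta> / sqrt 2 * Ham p N (\<lambda>l. g l \<omega>) \<sigma> + c * real N * mag N (\<lambda>i. h i \<omega>) \<sigma> ^ p)) / real N)
             \<longlonglongrightarrow> G m0"
  proof (rule eventually_mono[OF eventually_conj[OF AE_space AE1]])
    fix \<omega> assume elim: "\<omega> \<in> space M \<and> (\<forall>q\<in>\<rat>. (\<lambda>N. FN p N (\<lambda>l. g l \<omega>) (\<lambda>i. h i \<omega>) \<beta> (c * real p * q ^ (p - 1)))
                  \<longlonglongrightarrow> F \<beta> (c * real p * q ^ (p - 1)))"
    define w where "w N \<sigma> = 2 powr (- real N) * exp (\<beta> / sqrt 2 * Ham p N (\<lambda>l. g l \<omega>) \<sigma>)" for N \<sigma>
    define m where "m N \<sigma> = mag N (\<lambda>i. h i \<omega>) \<sigma>" for N \<sigma>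
    have sym: "odd p \<or> (\<forall>N. \<exists>\<iota>. \<iota> ` cfg N \<subseteq> cfg N \<and> (\<forall>\<sigma>\<in>cfg N. \<iota> (\<iota> \<sigma>) = \<sigma> \<and> w N (\<iota> \<sigma>) = w N \<sigma> \<and> m N (\<iota> \<sigma>) = - m N \<sigma>))"
    proof (cases "odd p")
      case False
      hence ev: "even p" by simp
      have "\<forall>N. \<exists>\<iota>. \<iota> ` cfg N \<subseteq> cfg N \<and> (\<forall>\<sigma>\<in>cfg N. \<iota> (\<iota> \<sigma>) = \<sigma> \<and> w N (\<iota> \<sigma>) = w N \<sigma> \<and> m N (\<iota> \<sigma>) = - m N \<sigma>)"
      proof
        fix N show "\<exists>\<iota>. \<iota> ` cfg N \<subseteq> cfg N \<and> (\<forall>\<sigma>\<in>cfg N. \<iota> (\<iota> \<sigma>) = \<sigma> \<and> w N (\<iota> \<sigma>) = w N \<sigma> \<and> m N (\<iota> \<sigma>) = - m N \<sigma>)"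
          by (rule exI[of _ "flip N"]) (auto simp: flip_cfg flip_flip w_def m_def flip_mag flip_Ham[OF ev])
      qed
      thus ?thesis by blast
    qed simp
    have conv: "(\<lambda>N. ln (\<Sum>\<sigma>\<in>cfg N. w N \<sigma> * exp (c * real p * q ^ (p - 1) * real N * m N \<sigma>)) / real N)
                  \<longlonglongrightarrow> F \<beta> (c * real p * q ^ (p - 1))" if q: "q \<in> \<rat>" for q
    proof -
      have "(\<lambda>N. FN p N (\<lambda>l. g l \<omega>) (\<lambda>i. h i \<omega>) \<beta> (c * real p * q ^ (p - 1)))
                  \<longlonglongrightarrow> F \<beta> (c * real p * q ^ (p - 1))" using elim q by blast
      moreover have "FN p N (\<lambda>l. g l \<omega>) (\<lambda>i. h i \<omega>) \<beta> (c * real p * q ^ (p - 1))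
          = ln (\<Sum>\<sigma>\<in>cfg N. w N \<sigma> * exp (c * real p * q ^ (p - 1) * real N * m N \<sigma>)) / real N" for N
        unfolding FN_def w_def m_def by (simp add: exp_add mult.assoc)
      ultimately show ?thesis by simp
    qed
    have "(\<lambda>N. ln (\<Sum>\<sigma>\<in>cfg N. w N \<sigma> * exp (c * real N * m N \<sigma> ^ p)) / real N)
           \<longlonglongrightarrow> F \<beta> (c * real p * m0 ^ (p - 1)) - c * (real p - 1) * m0 ^ p"
    proof (rule det_conv')
      show "2 \<le> p" by (rule p2)
      show "0 < c" by (rule cpos)
      show "\<And>N. finite (cfg N)" by (rule cfg_fin)
      show "\<And>N. cfg N \<noteq> {}" by (rule cfg_ne)
      show "\<And>N \<sigma>. \<sigma> \<in> cfg N \<Longrightarrow> 0 < w N \<sigma>" unfolding w_def by simp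
      show "\<And>N \<sigma>. \<sigma> \<in> cfg N \<Longrightarrow> \<bar>m N \<sigma>\<bar> \<le> 1" unfolding m_def
        by (rule mag_bound) (use sign_vals elim in auto)
      show "odd p \<or> (\<forall>N. \<exists>\<iota>. \<iota> ` cfg N \<subseteq> cfg N \<and> (\<forall>\<sigma>\<in>cfg N. \<iota> (\<iota> \<sigma>) = \<sigma> \<and> w N (\<iota> \<sigma>) = w N \<sigma> \<and> m N (\<iota> \<sigma>) = - m N \<sigma>))"
        by (rule sym)
      show "\<And>q. q \<in> \<rat> \<Longrightarrow> (\<lambda>N. ln (\<Sum>\<sigma>\<in>cfg N. w N \<sigma> * exp (c * real p * q ^ (p - 1) * real N * m N \<sigma>)) / real N)
                  \<longlonglongrightarrow> F \<beta> (c * real p * q ^ (p - 1))" by (rule conv)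
      show "\<And>y. isCont (F \<beta>) y" by (rule Fc)
      show "\<And>y. 0 < y \<Longrightarrow> F \<beta> 0 < F \<beta> y" by (rule incr)
      show "0 \<le> m0" "m0 \<le> 1" using m0 by auto
      show "\<forall>t\<in>{0..1}. F \<beta> (c * real p * t ^ (p - 1)) - c * (real p - 1) * t ^ p
                 \<le> F \<beta> (c * real p * m0 ^ (p - 1)) - c * (real p - 1) * m0 ^ p"
        using m0 unfolding G_def by blast
    qed
    moreover have "(\<Sum>\<sigma>\<in>cfg N. w N \<sigma> * exp (c * real N * m N \<sigma> ^ p)) = (\<Sum>\<sigma>\<in>cfg N. 2 powr (- real N) *
              exp (\<beta> / sqrt 2 * Ham p N (\<lambda>l. g l \<omega>) \<sigma> + c * real N * mag N (\<lambda>i. h i \<omega>) \<sigma> ^ p))" for N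
      unfolding w_def m_def by (simp add: exp_add mult.assoc)
    ultimately show "(\<lambda>N. ln (\<Sum>\<sigma>\<in>cfg N. 2 powr (- real N) *
              exp (\<beta> / sqrt 2 * Ham p N (\<lambda>l. g l \<omega>) \<sigma> + c * real N * mag N (\<lambda>i. h i \<omega>) \<sigma> ^ p)) / real N)
             \<longlonglongrightarrow> G m0" unfolding G_def by simp
  qed
  thus ?thesis using m0 unfolding G_def by blast
qed


theorem mainTheorem18:
  fixes M :: "'w measure" and p :: nat
    and g :: "nat list \<Rightarrow> 'w \<Rightarrow> real" and h :: "nat \<Rightarrow> 'w \<Rightarrow> real"
    and F :: "real \<Rightarrow> real \<Rightarrow> real" and \<beta> x :: real
  assumes "prob_space M"
    and "p \<ge> 2"
    and indep: "prob_space.indep_vars M (\<lambda>_. borel)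
          (\<lambda>k. case k of Inl l \<Rightarrow> g l | Inr i \<Rightarrow> h i)
          (Inl ` {l. length l = p} \<union> range Inr)"
    and gauss: "\<And>l. length l = p \<Longrightarrow> distributed M lborel (g l) std_normal_density"
    and sign_vals: "\<And>i \<omega>. \<omega> \<in> space M \<Longrightarrow> h i \<omega> \<in> {-1, 1}"
    and sign_unif: "\<And>i. measure M {\<omega> \<in> space M. h i \<omega> = 1} = 1 / 2"
    and F_lim: "\<And>b y. AE \<omega> in M.
          (\<lambda>N. FN p N (\<lambda>l. g l \<omega>) (\<lambda>i. h i \<omega>) b y) \<longlonglongrightarrow> F b y"
    and F_diff: "\<And>b y. F b differentiable (at y)"
    and F_deriv_pos: "\<And>b y. y > 0 \<Longrightarrow> deriv (F b) y > 0"
    and "\<beta> > 0" and "x > 0"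
  shows "(\<exists>m0\<in>{0..1}.
            (\<forall>m\<in>{0..1}. F \<beta> (\<beta>\<^sup>2 * real p * m ^ (p - 1) / 2) - \<beta>\<^sup>2 * (real p - 1) * m ^ p / 2
                 \<le> F \<beta> (\<beta>\<^sup>2 * real p * m0 ^ (p - 1) / 2) - \<beta>\<^sup>2 * (real p - 1) * m0 ^ p / 2) \<and>
            (AE \<omega> in M. (\<lambda>N. AFN p N (\<lambda>l. g l \<omega>) (\<lambda>i. h i \<omega>) \<beta>) \<longlonglongrightarrow>
                 F \<beta> (\<beta>\<^sup>2 * real p * m0 ^ (p - 1) / 2) - \<beta>\<^sup>2 * (real p - 1) * m0 ^ p / 2))
       \<and> (\<exists>m0\<in>{0..1}.
            (\<forall>m\<in>{0..1}. F \<beta> (\<beta> * x * real p * m ^ (p - 1) / 2) - \<beta> * x * (real p - 1) * m ^ p / 2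
                 \<le> F \<beta> (\<beta> * x * real p * m0 ^ (p - 1) / 2) - \<beta> * x * (real p - 1) * m0 ^ p / 2) \<and>
            (AE \<omega> in M. (\<lambda>N. LN p N (\<lambda>l. g l \<omega>) (\<lambda>i. h i \<omega>) \<beta> x) \<longlonglongrightarrow>
                 F \<beta> (\<beta> * x * real p * m0 ^ (p - 1) / 2) - \<beta> * x * (real p - 1) * m0 ^ p / 2))"
  proof -
  have p2: "p \<ge> 2" using assms(2) .
  have c1: "\<beta>\<^sup>2 / 2 > 0" using \<open>\<beta> > 0\<close> by simp
  have c2: "\<beta> * x / 2 > 0" using \<open>\<beta> > 0\<close> \<open>x > 0\<close> by simp
  have e1: "\<And>m::real. \<beta>\<^sup>2 / 2 * real p * m ^ (p - 1) = \<beta>\<^sup>2 * real p * m ^ (p - 1) / 2" by simp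
  have e2: "\<And>m::real. \<beta>\<^sup>2 / 2 * (real p - 1) * m ^ p = \<beta>\<^sup>2 * (real p - 1) * m ^ p / 2" by simp
  have e3: "\<And>m::real. \<beta> * x / 2 * real p * m ^ (p - 1) = \<beta> * x * real p * m ^ (p - 1) / 2" by simp
  have e4: "\<And>m::real. \<beta> * x / 2 * (real p - 1) * m ^ p = \<beta> * x * (real p - 1) * m ^ p / 2" by simp
  obtain m1 where m1: "m1 \<in> {0..1}"
    "\<forall>m\<in>{0..1}. F \<beta> (\<beta>\<^sup>2 / 2 * real p * m ^ (p - 1)) - \<beta>\<^sup>2 / 2 * (real p - 1) * m ^ p
                 \<le> F \<beta> (\<beta>\<^sup>2 / 2 * real p * m1 ^ (p - 1)) - \<beta>\<^sup>2 / 2 * (real p - 1) * m1 ^ p"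
    "AE \<omega> in M. (\<lambda>N. ln (\<Sum>\<sigma>\<in>cfg N. 2 powr (- real N) *
              exp (\<beta> / sqrt 2 * Ham p N (\<lambda>l. g l \<omega>) \<sigma> + \<beta>\<^sup>2 / 2 * real N * mag N (\<lambda>i. h i \<omega>) \<sigma> ^ p)) / real N)
             \<longlonglongrightarrow> F \<beta> (\<beta>\<^sup>2 / 2 * real p * m1 ^ (p - 1)) - \<beta>\<^sup>2 / 2 * (real p - 1) * m1 ^ p"
    using main_c[where \<beta>=\<beta> and c="\<beta>\<^sup>2 / 2", OF p2 sign_vals F_lim F_diff F_deriv_pos c1] by blast
  obtain m2 where m2: "m2 \<in> {0..1}"
    "\<forall>m\<in>{0..1}. F \<beta> (\<beta> * x / 2 * real p * m ^ (p - 1)) - \<beta> * x / 2 * (real p - 1) * m ^ p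
                 \<le> F \<beta> (\<beta> * x / 2 * real p * m2 ^ (p - 1)) - \<beta> * x / 2 * (real p - 1) * m2 ^ p"
    "AE \<omega> in M. (\<lambda>N. ln (\<Sum>\<sigma>\<in>cfg N. 2 powr (- real N) *
              exp (\<beta> / sqrt 2 * Ham p N (\<lambda>l. g l \<omega>) \<sigma> + \<beta> * x / 2 * real N * mag N (\<lambda>i. h i \<omega>) \<sigma> ^ p)) / real N)
             \<longlonglongrightarrow> F \<beta> (\<beta> * x / 2 * real p * m2 ^ (p - 1)) - \<beta> * x / 2 * (real p - 1) * m2 ^ p"
    using main_c[where \<beta>=\<beta> and c="\<beta> * x / 2", OF p2 sign_vals F_lim F_diff F_deriv_pos c2] by blast
  show ?thesis
  proof (rule conjI)
    show "\<exists>m0\<in>{0..1}.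
            (\<forall>m\<in>{0..1}. F \<beta> (\<beta>\<^sup>2 * real p * m ^ (p - 1) / 2) - \<beta>\<^sup>2 * (real p - 1) * m ^ p / 2
                 \<le> F \<beta> (\<beta>\<^sup>2 * real p * m0 ^ (p - 1) / 2) - \<beta>\<^sup>2 * (real p - 1) * m0 ^ p / 2) \<and>
            (AE \<omega> in M. (\<lambda>N. AFN p N (\<lambda>l. g l \<omega>) (\<lambda>i. h i \<omega>) \<beta>) \<longlonglongrightarrow>
                 F \<beta> (\<beta>\<^sup>2 * real p * m0 ^ (p - 1) / 2) - \<beta>\<^sup>2 * (real p - 1) * m0 ^ p / 2)"
      unfolding AFN_def using m1(1) m1(2)[unfolded e1 e2] m1(3)[unfolded e1 e2] by blast
    show "\<exists>m0\<in>{0..1}.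
            (\<forall>m\<in>{0..1}. F \<beta> (\<beta> * x * real p * m ^ (p - 1) / 2) - \<beta> * x * (real p - 1) * m ^ p / 2
                 \<le> F \<beta> (\<beta> * x * real p * m0 ^ (p - 1) / 2) - \<beta> * x * (real p - 1) * m0 ^ p / 2) \<and>
            (AE \<omega> in M. (\<lambda>N. LN p N (\<lambda>l. g l \<omega>) (\<lambda>i. h i \<omega>) \<beta> x) \<longlonglongrightarrow>
                 F \<beta> (\<beta> * x * real p * m0 ^ (p - 1) / 2) - \<beta> * x * (real p - 1) * m0 ^ p / 2)"
      unfolding LN_def using m2(1) m2(2)[unfolded e3 e4] m2(3)[unfolded e3 e4] by blast
  qed
qed

end
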